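(* Let $r>0$ and let $\mu_{1},\mu_{2}$ be symmetric probability measures on $\mathbb{R}^{d}$ supported on $\{x\in\mathbb{R}^{d}:\|x\|_{2}\leq r\}$. Let $\eta:\mathbb{R}^{d}\to\mathbb{R}^{d\times d}$, $\eta(x)=xx^{T}$, and let $\eta_{\#}\mu_{1},\eta_{\#}\mu_{2}$ be the pushforward measures, regarded as probability measures on the Banach space $E=(\mathbb{R}^{d\times d},\|\cdot\|_{\mathrm{op}})$. Then \[W_{2,1}(\mu_{1},\mu_{2})^{2}\leq W_{1,1}(\eta_{\#}\mu_{1},\eta_{\#}\mu_{2}).\]
   Context: A probability measure $\mu$ on $\mathbb{R}^{d}$ is symmetric if $\mu(A)=\mu(-A)$ for all measurable $A$. $\|\cdot\|_{\mathrm{op}}$ is the operator norm. For probability measures on $\mathbb{R}$, $W_{p}(\nu_{1},\nu_{2})=\inf_{\gamma}(\int|x-y|^{p}d\gamma(x,y))^{1/p}$ over couplings. On $\mathbb{R}^{d}$ (Euclidean), $W_{2,1}(\mu_{1},\mu_{2})=\sup_{\|v\|_{2}=1}W_{2}(v_{\#}\mu_{1},v_{\#}\mu_{2})$ with $v_{\#}\mu_i$ the pushforward under $x\mapsto\langle x,v\rangle$. On a Banach space $E$, $W_{1,1}(\nu_{1},\nu_{2})=\sup_{V^{*}\in B_{E^{*}}}W_{1}(V^{*}_{\#}\nu_{1},V^{*}_{\#}\nu_{2})$, where $B_{E^{*}}$ is the unit ball of the dual; for $E=(\mathbb{R}^{d\times d},\|\cdot\|_{\mathrm{op}})$ these are the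 functionals $A\mapsto\mathrm{Tr}(BA)$ with $B$ of trace-class (nuclear) norm at most $1$. *)

theory Defs
  imports "HOL-Probability.Probability"
begin

definition couplings :: "real measure \<Rightarrow> real measure \<Rightarrow> (real \<times> real) measure set" where
  "couplings M N = {\<gamma>. prob_space \<gamma> \<and> sets \<gamma> = sets (borel :: (real \<times> real) measure) \<and>
                        distr \<gamma> borel fst = M \<and> distr \<gamma> borel snd = N}"

definition wasserstein :: "real \<Rightarrow> real measure \<Rightarrow> real measure \<Rightarrow> real" where
  "wasserstein p M N =
     (enn2real (INF \<gamma>\<in>couplings M N. \<integral>\<^sup>+ z. ennreal (\<bar>fst z - snd z\<bar> powr p) \<partial>\<gamma>)) powr (1 / p)"

definition W21 :: "(real^'n) measure \<Rightarrow> (real^'n) measure \<Rightarrow> real" where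
  "W21 \<mu>1 \<mu>2 = (SUP v\<in>{v :: real^'n. norm v = 1}.
      wasserstein 2 (distr \<mu>1 borel (\<lambda>x. x \<bullet> v)) (distr \<mu>2 borel (\<lambda>x. x \<bullet> v)))"

definition op_norm :: "real^'n^'n \<Rightarrow> real" where
  "op_norm A = onorm (\<lambda>x. A *v x)"

definition dual_unit_ball_op :: "(real^'n^'n \<Rightarrow> real) set" where
  "dual_unit_ball_op = {f. linear f \<and> (\<forall>A. \<bar>f A\<bar> \<le> op_norm A)}"

definition W11_op :: "(real^'n^'n) measure \<Rightarrow> (real^'n^'n) measure \<Rightarrow> real" where
  "W11_op \<nu>1 \<nu>2 = (SUP f\<in>dual_unit_ball_op.
      wasserstein 1 (distr \<nu>1 borel f) (distr \<nu>2 borel f))"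

definition outer_self :: "real^'n \<Rightarrow> real^'n^'n" where
  "outer_self x = (\<chi> i j. x $ i * x $ j)"

definition symmetric_measure :: "'a::real_normed_vector measure \<Rightarrow> bool" where
  "symmetric_measure \<mu> \<longleftrightarrow> (\<forall>A\<in>sets \<mu>. emeasure \<mu> A = emeasure \<mu> (uminus ` A))"

end

theory Submission
  imports Defs
begin

lemma borel_preimage_uminus: "A \<in> sets (borel::real measure) \<Longrightarrow> {x::real. -x \<in> A} \<in> sets borel"
proof -
  assume "A \<in> sets (borel::real measure)"
  then have "uminus -` A \<inter> space borel \<in> sets (borel::real measure)"
    by (intro measurable_sets[of uminus borel borel]) auto
  then show ?thesis by (simp add: vimage_def)
qed

lemma sym_split:
  fixes \<nu> :: "real measure"
  assumes sets: "sets \<nu> = sets borel"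
    and sym: "\<And>B. B \<in> sets borel \<Longrightarrow> emeasure \<nu> (uminus ` B) = emeasure \<nu> B"
    and A: "A \<in> sets borel"
  shows "emeasure \<nu> {x. \<bar>x\<bar> \<in> A} + emeasure \<nu> {x. -\<bar>x\<bar> \<in> A} = 2 * emeasure \<nu> A"
proof -
  have nA: "{x::real. -x \<in> A} \<in> sets borel" using A by (rule borel_preimage_uminus)
  have s1: "A \<inter> {0..} \<in> sets \<nu>" "A \<inter> {0<..} \<in> sets \<nu>" "A \<inter> {..0} \<in> sets \<nu>" "A \<inter> {..<0} \<in> sets \<nu>"
    using A sets by auto
  have s2: "{x::real. -x \<in> A} \<inter> {..<0} \<in> sets \<nu>" "{x::real. -x \<in> A} \<inter> {0<..} \<in> sets \<nu>"
    using nA sets by auto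
  have i1: "uminus ` (A \<inter> {0<..}) = {x::real. -x \<in> A} \<inter> {..<0}"
    by (auto simp: image_iff) (rule_tac x="-x" in bexI, auto)
  have i2: "uminus ` (A \<inter> {..<0}) = {x::real. -x \<in> A} \<inter> {0<..}"
    by (auto simp: image_iff) (rule_tac x="-x" in bexI, auto)
  have e1: "{x. \<bar>x\<bar> \<in> A} = (A \<inter> {0..}) \<union> ({x::real. -x \<in> A} \<inter> {..<0})"
    by (auto simp: abs_if)
  have e2: "{x. -\<bar>x\<bar> \<in> A} = (A \<inter> {..0}) \<union> ({x::real. -x \<in> A} \<inter> {0<..})"
    by (auto simp: abs_if)
  have "emeasure \<nu> {x. \<bar>x\<bar> \<in> A} = emeasure \<nu> (A \<inter> {0..}) + emeasure \<nu> ({x::real. -x \<in> A} \<inter> {..<0})"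
    unfolding e1 by (rule plus_emeasure[symmetric]) (use s1 s2 in auto)
  also have "emeasure \<nu> ({x::real. -x \<in> A} \<inter> {..<0}) = emeasure \<nu> (A \<inter> {0<..})"
    using sym[of "A \<inter> {0<..}"] A i1 by auto
  finally have m1: "emeasure \<nu> {x. \<bar>x\<bar> \<in> A} = emeasure \<nu> (A \<inter> {0..}) + emeasure \<nu> (A \<inter> {0<..})" .
  have "emeasure \<nu> {x. -\<bar>x\<bar> \<in> A} = emeasure \<nu> (A \<inter> {..0}) + emeasure \<nu> ({x::real. -x \<in> A} \<inter> {0<..})"
    unfolding e2 by (rule plus_emeasure[symmetric]) (use s1 s2 in auto)
  also have "emeasure \<nu> ({x::real. -x \<in> A} \<inter> {0<..}) = emeasure \<nu> (A \<inter> {..<0})"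
    using sym[of "A \<inter> {..<0}"] A i2 by auto
  finally have m2: "emeasure \<nu> {x. -\<bar>x\<bar> \<in> A} = emeasure \<nu> (A \<inter> {..0}) + emeasure \<nu> (A \<inter> {..<0})" .
  have a1: "emeasure \<nu> A = emeasure \<nu> (A \<inter> {0..}) + emeasure \<nu> (A \<inter> {..<0})"
  proof -
    have "A = (A \<inter> {0..}) \<union> (A \<inter> {..<0})" by auto
    moreover have "A \<inter> {0..} \<inter> (A \<inter> {..<0}) = {}" by auto
    ultimately show ?thesis using plus_emeasure[OF s1(1) s1(4)] by metis
  qed
  have a2: "emeasure \<nu> A = emeasure \<nu> (A \<inter> {0<..}) + emeasure \<nu> (A \<inter> {..0})"
  proof -
    have "A = (A \<inter> {0<..}) \<union> (A \<inter> {..0})" by auto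
    moreover have "A \<inter> {0<..} \<inter> (A \<inter> {..0}) = {}" by auto
    ultimately show ?thesis using plus_emeasure[OF s1(2) s1(3)] by metis
  qed
  show ?thesis unfolding m1 m2 using a1 a2
    by (metis (no_types, lifting) ab_semigroup_add_class.add_ac(1) add.commute mult_2)
qed


definition sgnb :: "bool \<Rightarrow> real" where "sgnb e = (if e then 1 else -1)"

abbreviation Bh :: "bool measure" where "Bh \<equiv> measure_pmf (bernoulli_pmf (1/2))"

lemma meas_h:
  fixes \<gamma> :: "(real\<times>real) measure" and \<pi> :: "real\<times>real \<Rightarrow> real"
  assumes "sets \<gamma> = sets borel" "\<pi> \<in> borel_measurable borel"
  shows "(\<lambda>z. sgnb (snd z) * sqrt \<bar>\<pi> (fst z)\<bar>) \<in> borel_measurable (\<gamma> \<Otimes>\<^sub>M Bh)"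
proof -
  have p: "\<pi> \<in> borel_measurable \<gamma>" unfolding measurable_cong_sets[OF assms(1) refl] by (rule assms(2))
  have s: "(\<lambda>z. sgnb (snd z)) \<in> borel_measurable (\<gamma> \<Otimes>\<^sub>M Bh)"
    by (rule measurable_compose[OF measurable_snd]) simp
  show ?thesis
  proof (rule borel_measurable_times[OF s])
    have "(\<lambda>x. sqrt \<bar>\<pi> x\<bar>) \<in> borel_measurable \<gamma>"
      by (rule measurable_compose[OF borel_measurable_abs[OF p] borel_measurable_sqrt])
    then show "(\<lambda>z. sqrt \<bar>\<pi> (fst z)\<bar>) \<in> borel_measurable (\<gamma> \<Otimes>\<^sub>M Bh)"
      by (rule measurable_compose[OF measurable_fst])
  qed
qed

lemma emeasure_sqrt_marg:
  fixes \<gamma> :: "(real\<times>real) measure" and \<nu> :: "real measure" and \<pi> :: "real\<times>real \<Rightarrow> real"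
  assumes g: "sets \<gamma> = sets borel" and p: "\<pi> \<in> borel_measurable borel"
    and n: "sets \<nu> = sets borel"
    and marg: "distr \<gamma> borel \<pi> = distr \<nu> borel (\<lambda>x. x^2)"
    and A: "A \<in> sets borel"
  shows "emeasure \<gamma> {z. c * sqrt \<bar>\<pi> z\<bar> \<in> A} = emeasure \<nu> {x. c * \<bar>x\<bar> \<in> A}"
proof -
  have sg: "space \<gamma> = UNIV" using sets_eq_imp_space_eq[OF g] by simp
  have sn: "space \<nu> = UNIV" using sets_eq_imp_space_eq[OF n] by simp
  have pg: "\<pi> \<in> measurable \<gamma> borel" unfolding measurable_cong_sets[OF g refl] by (rule p)
  have qn: "(\<lambda>x::real. x^2) \<in> measurable \<nu> borel" unfolding measurable_cong_sets[OF n refl] by simp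
  have B: "{a::real. c * sqrt \<bar>a\<bar> \<in> A} \<in> sets borel"
  proof -
    have "(\<lambda>a::real. c * sqrt \<bar>a\<bar>) \<in> borel_measurable borel" by measurable
    from measurable_sets[OF this A] show ?thesis by (simp add: vimage_def)
  qed
  have "emeasure \<gamma> {z. c * sqrt \<bar>\<pi> z\<bar> \<in> A} = emeasure (distr \<gamma> borel \<pi>) {a. c * sqrt \<bar>a\<bar> \<in> A}"
    using B pg by (subst emeasure_distr) (auto simp: sg vimage_def)
  also have "\<dots> = emeasure (distr \<nu> borel (\<lambda>x. x^2)) {a. c * sqrt \<bar>a\<bar> \<in> A}"
    using marg by simp
  also have "\<dots> = emeasure \<nu> {x. c * sqrt \<bar>x^2\<bar> \<in> A}"
    using B qn by (subst emeasure_distr) (auto simp: sn vimage_def)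
  also have "\<dots> = emeasure \<nu> {x. c * \<bar>x\<bar> \<in> A}" by simp
  finally show ?thesis .
qed


lemma mix_marginal:
  fixes \<gamma> :: "(real\<times>real) measure" and \<nu> :: "real measure" and \<pi> :: "real\<times>real \<Rightarrow> real"
  assumes gp: "prob_space \<gamma>" and g: "sets \<gamma> = sets borel" and p: "\<pi> \<in> borel_measurable borel"
    and n: "sets \<nu> = sets borel"
    and sym: "\<And>B. B \<in> sets borel \<Longrightarrow> emeasure \<nu> (uminus ` B) = emeasure \<nu> B"
    and marg: "distr \<gamma> borel \<pi> = distr \<nu> borel (\<lambda>x. x^2)"
  shows "distr (\<gamma> \<Otimes>\<^sub>M Bh) borel (\<lambda>z. sgnb (snd z) * sqrt \<bar>\<pi> (fst z)\<bar>) = \<nu>"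
proof (rule measure_eqI)
  show "sets (distr (\<gamma> \<Otimes>\<^sub>M Bh) borel (\<lambda>z. sgnb (snd z) * sqrt \<bar>\<pi> (fst z)\<bar>)) = sets \<nu>"
    using n by simp
  fix A assume "A \<in> sets (distr (\<gamma> \<Otimes>\<^sub>M Bh) borel (\<lambda>z. sgnb (snd z) * sqrt \<bar>\<pi> (fst z)\<bar>))"
  then have A: "A \<in> sets borel" by simp
  interpret G: prob_space \<gamma> by (rule gp)
  interpret GB: pair_sigma_finite \<gamma> Bh
    by (simp add: G.sigma_finite_measure_axioms measure_pmf.sigma_finite_measure_axioms pair_sigma_finite_def)
  have sg: "space \<gamma> = UNIV" using sets_eq_imp_space_eq[OF g] by simp
  have mh: "(\<lambda>z. sgnb (snd z) * sqrt \<bar>\<pi> (fst z)\<bar>) \<in> borel_measurable (\<gamma> \<Otimes>\<^sub>M Bh)"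
    by (rule meas_h[OF g p])
  let ?X = "(\<lambda>z. sgnb (snd z) * sqrt \<bar>\<pi> (fst z)\<bar>) -` A \<inter> space (\<gamma> \<Otimes>\<^sub>M Bh)"
  have X: "?X \<in> sets (\<gamma> \<Otimes>\<^sub>M Bh)" using measurable_sets[OF mh A] .
  have "emeasure (distr (\<gamma> \<Otimes>\<^sub>M Bh) borel (\<lambda>z. sgnb (snd z) * sqrt \<bar>\<pi> (fst z)\<bar>)) A
      = emeasure (\<gamma> \<Otimes>\<^sub>M Bh) ?X"
    using mh A by (rule emeasure_distr)
  also have "\<dots> = (\<integral>\<^sup>+e. emeasure \<gamma> ((\<lambda>x. (x, e)) -` ?X) \<partial>Bh)"
    using X by (rule GB.emeasure_pair_measure_alt2)
  also have "\<dots> = (\<Sum>e\<in>UNIV. emeasure \<gamma> ((\<lambda>x. (x, e)) -` ?X) * ennreal (1/2))"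
    by (subst nn_integral_measure_pmf_finite) auto
  also have "\<dots> = emeasure \<gamma> {z. sqrt \<bar>\<pi> z\<bar> \<in> A} * ennreal (1/2)
                 + emeasure \<gamma> {z. - sqrt \<bar>\<pi> z\<bar> \<in> A} * ennreal (1/2)"
    by (simp add: UNIV_bool sgnb_def space_pair_measure sg vimage_def add.commute)
  also have "\<dots> = (emeasure \<nu> {x. \<bar>x\<bar> \<in> A} + emeasure \<nu> {x. -\<bar>x\<bar> \<in> A}) * ennreal (1/2)"
  proof -
    have c1: "emeasure \<gamma> {z. sqrt \<bar>\<pi> z\<bar> \<in> A} = emeasure \<nu> {x. \<bar>x\<bar> \<in> A}"
      using emeasure_sqrt_marg[OF g p n marg A, of 1] by simp
    have c2: "emeasure \<gamma> {z. - sqrt \<bar>\<pi> z\<bar> \<in> A} = emeasure \<nu> {x. - \<bar>x\<bar> \<in> A}"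
      using emeasure_sqrt_marg[OF g p n marg A, of "-1"] by simp
    show ?thesis unfolding c1 c2 by (simp only: distrib_right)
  qed
  also have "\<dots> = 2 * emeasure \<nu> A * ennreal (1/2)"
    using sym_split[OF n sym A] by simp
  also have "\<dots> = emeasure \<nu> A"
  proof -
    have "(2::ennreal) * ennreal (1/2) = 1"
      using ennreal_mult[of 2 "1/2"] by simp
    then show ?thesis by (metis mult.commute mult.left_commute mult_1)
  qed
  finally show "emeasure (distr (\<gamma> \<Otimes>\<^sub>M Bh) borel (\<lambda>z. sgnb (snd z) * sqrt \<bar>\<pi> (fst z)\<bar>)) A = emeasure \<nu> A" .
qed


lemma sqrt_ineq: "(sqrt \<bar>a\<bar> - sqrt \<bar>b\<bar>)^2 \<le> \<bar>a - b::real\<bar>"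
proof -
  define x where "x = sqrt \<bar>a\<bar>"
  define y where "y = sqrt \<bar>b\<bar>"
  have x0: "x \<ge> 0" and y0: "y \<ge> 0" by (auto simp: x_def y_def)
  have ax: "\<bar>a\<bar> = x^2" and yb: "\<bar>b\<bar> = y^2" by (auto simp: x_def y_def)
  have "(x - y)^2 = \<bar>x - y\<bar> * \<bar>x - y\<bar>" by (simp add: power2_eq_square abs_mult_self_eq)
  also have "\<dots> \<le> \<bar>x - y\<bar> * (x + y)"
    using x0 y0 by (intro mult_left_mono) auto
  also have "\<dots> = \<bar>x^2 - y^2\<bar>"
  proof -
    have "x^2 - y^2 = (x - y) * (x + y)" by (simp add: power2_eq_square algebra_simps)
    then have "\<bar>x^2 - y^2\<bar> = \<bar>x - y\<bar> * \<bar>x + y\<bar>" by (simp add: abs_mult)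
    then show ?thesis using x0 y0 by simp
  qed
  also have "\<dots> = \<bar>\<bar>a\<bar> - \<bar>b\<bar>\<bar>" using ax yb by simp
  also have "\<dots> \<le> \<bar>a - b\<bar>" by (rule abs_triangle_ineq3)
  finally show ?thesis by (simp add: x_def y_def)
qed

lemma sgnb_ineq: "\<bar>sgnb e * sqrt \<bar>a\<bar> - sgnb e * sqrt \<bar>b\<bar>\<bar> powr 2 \<le> \<bar>a - b::real\<bar> powr 1"
proof -
  have "\<bar>sgnb e * sqrt \<bar>a\<bar> - sgnb e * sqrt \<bar>b\<bar>\<bar> = \<bar>sqrt \<bar>a\<bar> - sqrt \<bar>b\<bar>\<bar>"
    by (cases e) (auto simp: sgnb_def)
  then show ?thesis using sqrt_ineq[of a b] by simp
qed


lemma fst_borel: "fst \<in> borel_measurable (borel::(real\<times>real) measure)"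
  using measurable_fst[of "borel::real measure" "borel::real measure"] by (simp add: borel_prod)
lemma snd_borel: "snd \<in> borel_measurable (borel::(real\<times>real) measure)"
  using measurable_snd[of "borel::real measure" "borel::real measure"] by (simp add: borel_prod)

lemma cost_meas: "(\<lambda>z::real\<times>real. ennreal (\<bar>fst z - snd z\<bar> powr p)) \<in> borel_measurable borel"
proof -
  have "(\<lambda>z::real\<times>real. fst z - snd z) \<in> borel_measurable borel"
    using fst_borel snd_borel by (rule borel_measurable_diff)
  then have "(\<lambda>z::real\<times>real. \<bar>fst z - snd z\<bar> powr p) \<in> borel_measurable borel"
    by measurable
  then show ?thesis by measurable
qed

lemma absdiff_meas: "(\<lambda>z::real\<times>real. \<bar>fst z - snd z\<bar>) \<in> borel_measurable borel"
proof -
  have "(\<lambda>z::real\<times>real. fst z - snd z) \<in> borel_measurable borel"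
    using fst_borel snd_borel by (rule borel_measurable_diff)
  then show ?thesis by measurable
qed

lemma core_INF:
  fixes \<nu>1 \<nu>2 :: "real measure"
  assumes p1: "prob_space \<nu>1" and s1: "sets \<nu>1 = sets borel"
    and p2: "prob_space \<nu>2" and s2: "sets \<nu>2 = sets borel"
    and sym1: "\<And>B. B \<in> sets borel \<Longrightarrow> emeasure \<nu>1 (uminus ` B) = emeasure \<nu>1 B"
    and sym2: "\<And>B. B \<in> sets borel \<Longrightarrow> emeasure \<nu>2 (uminus ` B) = emeasure \<nu>2 B"
  shows "(INF \<gamma>\<in>couplings \<nu>1 \<nu>2. \<integral>\<^sup>+ z. ennreal (\<bar>fst z - snd z\<bar> powr 2) \<partial>\<gamma>)
     \<le> (INF \<gamma>\<in>couplings (distr \<nu>1 borel (\<lambda>x. x^2)) (distr \<nu>2 borel (\<lambda>x. x^2)).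
            \<integral>\<^sup>+ z. ennreal (\<bar>fst z - snd z\<bar> powr 1) \<partial>\<gamma>)"
proof (rule INF_greatest)
  fix \<gamma> assume "\<gamma> \<in> couplings (distr \<nu>1 borel (\<lambda>x. x^2)) (distr \<nu>2 borel (\<lambda>x. x^2))"
  then have gp: "prob_space \<gamma>" and g: "sets \<gamma> = sets borel"
    and m1: "distr \<gamma> borel fst = distr \<nu>1 borel (\<lambda>x. x^2)"
    and m2: "distr \<gamma> borel snd = distr \<nu>2 borel (\<lambda>x. x^2)"
    by (auto simp: couplings_def)
  interpret G: prob_space \<gamma> by (rule gp)
  interpret GB: pair_prob_space \<gamma> Bh
    by (simp add: G.prob_space_axioms measure_pmf.prob_space_axioms pair_prob_space_def pair_sigma_finite_def G.sigma_finite_measure_axioms measure_pmf.sigma_finite_measure_axioms)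
  define G where "G = (\<lambda>z::(real\<times>real)\<times>bool. (sgnb (snd z) * sqrt \<bar>fst (fst z)\<bar>, sgnb (snd z) * sqrt \<bar>snd (fst z)\<bar>))"
  have h1: "(\<lambda>z. sgnb (snd z) * sqrt \<bar>fst (fst z)\<bar>) \<in> borel_measurable (\<gamma> \<Otimes>\<^sub>M Bh)"
    by (rule meas_h[OF g fst_borel])
  have h2: "(\<lambda>z. sgnb (snd z) * sqrt \<bar>snd (fst z)\<bar>) \<in> borel_measurable (\<gamma> \<Otimes>\<^sub>M Bh)"
    by (rule meas_h[OF g snd_borel])
  have mG: "G \<in> measurable (\<gamma> \<Otimes>\<^sub>M Bh) borel"
  proof -
    have "G \<in> measurable (\<gamma> \<Otimes>\<^sub>M Bh) (borel \<Otimes>\<^sub>M borel)"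
      unfolding G_def using h1 h2 by (rule measurable_Pair)
    then show ?thesis by (simp add: borel_prod)
  qed
  define \<gamma>' where "\<gamma>' = distr (\<gamma> \<Otimes>\<^sub>M Bh) borel G"
  have c: "\<gamma>' \<in> couplings \<nu>1 \<nu>2"
    unfolding couplings_def
  proof (intro CollectI conjI)
    show "prob_space \<gamma>'" unfolding \<gamma>'_def using mG by (rule GB.P.prob_space_distr)
    show "sets \<gamma>' = sets borel" unfolding \<gamma>'_def by simp
    have "distr \<gamma>' borel fst = distr (\<gamma> \<Otimes>\<^sub>M Bh) borel (\<lambda>z. sgnb (snd z) * sqrt \<bar>fst (fst z)\<bar>)"
      unfolding \<gamma>'_def using mG fst_borel snd_borel by (subst distr_distr) (auto simp: G_def comp_def)
    also have "\<dots> = \<nu>1"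
      by (rule mix_marginal[OF gp g fst_borel s1 sym1 m1])
    finally show "distr \<gamma>' borel fst = \<nu>1" .
    have "distr \<gamma>' borel snd = distr (\<gamma> \<Otimes>\<^sub>M Bh) borel (\<lambda>z. sgnb (snd z) * sqrt \<bar>snd (fst z)\<bar>)"
      unfolding \<gamma>'_def using mG fst_borel snd_borel by (subst distr_distr) (auto simp: G_def comp_def)
    also have "\<dots> = \<nu>2"
      by (rule mix_marginal[OF gp g snd_borel s2 sym2 m2])
    finally show "distr \<gamma>' borel snd = \<nu>2" .
  qed
  have "(INF \<gamma>\<in>couplings \<nu>1 \<nu>2. \<integral>\<^sup>+ z. ennreal (\<bar>fst z - snd z\<bar> powr 2) \<partial>\<gamma>)
      \<le> \<integral>\<^sup>+ z. ennreal (\<bar>fst z - snd z\<bar> powr 2) \<partial>\<gamma>'"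
    using c by (rule INF_lower)
  also have "\<dots> = \<integral>\<^sup>+ w. ennreal (\<bar>fst (G w) - snd (G w)\<bar> powr 2) \<partial>(\<gamma> \<Otimes>\<^sub>M Bh)"
    unfolding \<gamma>'_def by (subst nn_integral_distr[OF mG]) (simp_all add: cost_meas del: powr_numeral)
  also have "\<dots> \<le> \<integral>\<^sup>+ w. ennreal (\<bar>fst (fst w) - snd (fst w)\<bar> powr 1) \<partial>(\<gamma> \<Otimes>\<^sub>M Bh)"
    by (intro nn_integral_mono ennreal_leI) (simp only: G_def fst_conv snd_conv sgnb_ineq)
  also have "\<dots> = \<integral>\<^sup>+ z. ennreal (\<bar>fst z - snd z\<bar> powr 1) \<partial>(distr (\<gamma> \<Otimes>\<^sub>M Bh) borel fst)"
  proof -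
    have mf: "fst \<in> measurable (\<gamma> \<Otimes>\<^sub>M Bh) borel"
      using measurable_fst[of \<gamma> Bh] measurable_cong_sets[OF refl g] by blast
    show ?thesis by (subst nn_integral_distr[OF mf]) (simp_all add: cost_meas absdiff_meas del: powr_one')
  qed
  also have "distr (\<gamma> \<Otimes>\<^sub>M Bh) borel fst = \<gamma>"
  proof -
    have "distr (\<gamma> \<Otimes>\<^sub>M Bh) borel fst = distr (\<gamma> \<Otimes>\<^sub>M Bh) \<gamma> fst"
      by (rule distr_cong) (auto simp: g)
    also have "\<dots> = \<gamma>" by (rule measure_pmf.distr_pair_fst)
    finally show ?thesis .
  qed
  finally show "(INF \<gamma>\<in>couplings \<nu>1 \<nu>2. \<integral>\<^sup>+ z. ennreal (\<bar>fst z - snd z\<bar> powr 2) \<partial>\<gamma>)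
      \<le> \<integral>\<^sup>+ z. ennreal (\<bar>fst z - snd z\<bar> powr 1) \<partial>\<gamma>" .
qed


lemma prod_coupling:
  fixes M N :: "real measure"
  assumes pM: "prob_space M" and sM: "sets M = sets borel"
    and pN: "prob_space N" and sN: "sets N = sets borel"
  shows "M \<Otimes>\<^sub>M N \<in> couplings M N"
proof -
  interpret MM: prob_space M by (rule pM)
  interpret NN: prob_space N by (rule pN)
  interpret MN: pair_prob_space M N
    by (simp add: pair_prob_space_def pair_sigma_finite_def MM.prob_space_axioms NN.prob_space_axioms MM.sigma_finite_measure_axioms NN.sigma_finite_measure_axioms)
  have ss: "sets (M \<Otimes>\<^sub>M N) = sets (borel :: (real\<times>real) measure)"
  proof -
    have "sets (M \<Otimes>\<^sub>M N) = sets (borel \<Otimes>\<^sub>M borel)" by (rule sets_pair_measure_cong[OF sM sN])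
    then show ?thesis by (simp only: borel_prod)
  qed
  have d1: "distr (M \<Otimes>\<^sub>M N) borel fst = M"
  proof -
    have "distr (M \<Otimes>\<^sub>M N) borel fst = distr (M \<Otimes>\<^sub>M N) M fst"
      by (rule distr_cong) (auto simp: sM)
    also have "\<dots> = M" by (rule NN.distr_pair_fst)
    finally show ?thesis .
  qed
  have d2: "distr (M \<Otimes>\<^sub>M N) borel snd = N"
  proof -
    have "distr (M \<Otimes>\<^sub>M N) borel snd = distr (M \<Otimes>\<^sub>M N) N snd"
      by (rule distr_cong) (auto simp: sN)
    also have "\<dots> = N"
    proof (rule measure_eqI)
      fix A assume A: "A \<in> sets (distr (M \<Otimes>\<^sub>M N) N snd)"
      then have A': "A \<in> sets N" by simp
      have "emeasure (distr (M \<Otimes>\<^sub>M N) N snd) A = emeasure (M \<Otimes>\<^sub>M N) (space M \<times> A)"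
        using A by (auto simp add: emeasure_distr space_pair_measure dest: sets.sets_into_space intro!: arg_cong2[where f=emeasure])
      also have "\<dots> = emeasure N A"
        using NN.emeasure_pair_measure_Times[OF sets.top[of M] A'] by (simp add: MM.emeasure_space_1)
      finally show "emeasure (distr (M \<Otimes>\<^sub>M N) N snd) A = emeasure N A" .
    qed simp
    finally show ?thesis .
  qed
  show ?thesis unfolding couplings_def using MN.P.prob_space_axioms ss d1 d2 by auto
qed

lemma prod_bound:
  fixes M N :: "real measure"
  assumes pM: "prob_space M" and sM: "sets M = sets borel"
    and pN: "prob_space N" and sN: "sets N = sets borel"
    and bM: "AE x in M. \<bar>x\<bar> \<le> c" and bN: "AE x in N. \<bar>x\<bar> \<le> c"
  shows "(INF \<gamma>\<in>couplings M N. \<integral>\<^sup>+ z. ennreal (\<bar>fst z - snd z\<bar> powr 1) \<partial>\<gamma>) \<le> ennreal (2 * c)"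
proof -
  interpret MM: prob_space M by (rule pM)
  interpret NN: prob_space N by (rule pN)
  have c: "M \<Otimes>\<^sub>M N \<in> couplings M N" by (rule prod_coupling[OF pM sM pN sN])
  then have d1: "distr (M \<Otimes>\<^sub>M N) borel fst = M" and d2: "distr (M \<Otimes>\<^sub>M N) borel snd = N"
    and ss: "sets (M \<Otimes>\<^sub>M N) = sets borel"
    by (auto simp: couplings_def)
  have c0: "c \<ge> 0"
  proof -
    have "AE x in M. 0 \<le> c" using bM by eventually_elim auto
    then show ?thesis by simp
  qed
  have mf: "fst \<in> measurable (M \<Otimes>\<^sub>M N) borel"
    using fst_borel measurable_cong_sets[OF ss refl] by blast
  have ms: "snd \<in> measurable (M \<Otimes>\<^sub>M N) borel"
    using snd_borel measurable_cong_sets[OF ss refl] by blast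
  have ab: "(\<lambda>x::real. ennreal \<bar>x\<bar>) \<in> borel_measurable borel" by measurable
  have "(INF \<gamma>\<in>couplings M N. \<integral>\<^sup>+ z. ennreal (\<bar>fst z - snd z\<bar> powr 1) \<partial>\<gamma>)
      \<le> \<integral>\<^sup>+ z. ennreal (\<bar>fst z - snd z\<bar> powr 1) \<partial>(M \<Otimes>\<^sub>M N)"
    using c by (rule INF_lower)
  also have "\<dots> \<le> \<integral>\<^sup>+ z. (ennreal \<bar>fst z\<bar> + ennreal \<bar>snd z\<bar>) \<partial>(M \<Otimes>\<^sub>M N)"
    by (intro nn_integral_mono) (simp add: ennreal_plus[symmetric] del: ennreal_plus)
  also have "\<dots> = (\<integral>\<^sup>+ z. ennreal \<bar>fst z\<bar> \<partial>(M \<Otimes>\<^sub>M N)) + (\<integral>\<^sup>+ z. ennreal \<bar>snd z\<bar> \<partial>(M \<Otimes>\<^sub>M N))"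
    using measurable_compose[OF mf ab] measurable_compose[OF ms ab] by (intro nn_integral_add) auto
  also have "(\<integral>\<^sup>+ z. ennreal \<bar>fst z\<bar> \<partial>(M \<Otimes>\<^sub>M N)) = (\<integral>\<^sup>+ x. ennreal \<bar>x\<bar> \<partial>M)"
  proof -
    have "(\<integral>\<^sup>+ x. ennreal \<bar>x\<bar> \<partial>(distr (M \<Otimes>\<^sub>M N) borel fst)) = (\<integral>\<^sup>+ z. ennreal \<bar>fst z\<bar> \<partial>(M \<Otimes>\<^sub>M N))"
      by (rule nn_integral_distr[OF mf]) (use ab in simp)
    then show ?thesis using d1 by simp
  qed
  also have "(\<integral>\<^sup>+ z. ennreal \<bar>snd z\<bar> \<partial>(M \<Otimes>\<^sub>M N)) = (\<integral>\<^sup>+ x. ennreal \<bar>x\<bar> \<partial>N)"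
  proof -
    have "(\<integral>\<^sup>+ x. ennreal \<bar>x\<bar> \<partial>(distr (M \<Otimes>\<^sub>M N) borel snd)) = (\<integral>\<^sup>+ z. ennreal \<bar>snd z\<bar> \<partial>(M \<Otimes>\<^sub>M N))"
      by (rule nn_integral_distr[OF ms]) (use ab in simp)
    then show ?thesis using d2 by simp
  qed
  also have "(\<integral>\<^sup>+ x. ennreal \<bar>x\<bar> \<partial>M) \<le> (\<integral>\<^sup>+ x. ennreal c \<partial>M)"
    using bM by (intro nn_integral_mono_AE) (auto simp: ennreal_leI)
  also have "(\<integral>\<^sup>+ x. ennreal \<bar>x\<bar> \<partial>N) \<le> (\<integral>\<^sup>+ x. ennreal c \<partial>N)"
    using bN by (intro nn_integral_mono_AE) (auto simp: ennreal_leI)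
  also have "(\<integral>\<^sup>+ x. ennreal c \<partial>M) + (\<integral>\<^sup>+ x. ennreal c \<partial>N) = ennreal (2 * c)"
    using c0 by (simp add: MM.emeasure_space_1 NN.emeasure_space_1 ennreal_plus[symmetric] del: ennreal_plus)
  finally show ?thesis by (simp add: add_mono)
qed


lemma outer_mult: "outer_self x *v y = (x \<bullet> y) *\<^sub>R x"
  by (simp add: vec_eq_iff outer_self_def matrix_vector_mult_def inner_vec_def sum_distrib_left mult_ac)

lemma scaleR_mv: "(r *\<^sub>R A) *v (v::real^'n) = r *\<^sub>R (A *v v)"
  by (simp add: vec_eq_iff matrix_vector_mult_def sum_distrib_left mult_ac)

lemma outer_meas: "outer_self \<in> borel_measurable (borel :: (real^'n) measure)"
proof (rule borel_measurable_continuous_onI)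
  show "continuous_on UNIV (outer_self :: real^'n \<Rightarrow> real^'n^'n)"
    unfolding outer_self_def by (intro continuous_intros)
qed

lemma linear_meas:
  fixes f :: "real^'n^'n \<Rightarrow> real"
  assumes "linear f" shows "f \<in> borel_measurable borel"
proof (rule borel_measurable_continuous_onI)
  have "bounded_linear f" using assms by (simp add: linear_conv_bounded_linear)
  then show "continuous_on UNIV f" by (simp add: linear_continuous_on)
qed

lemma mv_bounded: "bounded_linear (\<lambda>y::real^'n. A *v y)"
  by (simp add: linear_conv_bounded_linear)

lemma op_norm_outer: "op_norm (outer_self (x::real^'n)) \<le> norm x ^ 2"
  unfolding op_norm_def
proof (rule onorm_le)
  fix y :: "real^'n"
  have "norm (outer_self x *v y) = \<bar>x \<bullet> y\<bar> * norm x" by (simp add: outer_mult)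
  also have "\<dots> \<le> (norm x * norm y) * norm x"
    by (intro mult_right_mono Cauchy_Schwarz_ineq2) simp
  finally show "norm (outer_self x *v y) \<le> norm x ^ 2 * norm y"
    by (simp add: power2_eq_square mult.commute mult.left_commute)
qed

definition fv :: "real^'n \<Rightarrow> real^'n^'n \<Rightarrow> real" where
  "fv v A = v \<bullet> (A *v v)"

lemma fv_ball:
  fixes v :: "real^'n"
  assumes "norm v = 1"
  shows "fv v \<in> dual_unit_ball_op"
  unfolding dual_unit_ball_op_def
proof (intro CollectI conjI allI)
  show "linear (fv v)"
    by (rule linearI) (simp_all add: fv_def matrix_vector_mult_add_rdistrib inner_add_right scaleR_mv)
  fix A :: "real^'n^'n"
  have "\<bar>fv v A\<bar> \<le> norm v * norm (A *v v)"
    unfolding fv_def by (rule Cauchy_Schwarz_ineq2)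
  also have "\<dots> \<le> onorm (\<lambda>y. A *v y)"
    using onorm[OF mv_bounded[of A], of v] assms by simp
  finally show "\<bar>fv v A\<bar> \<le> op_norm A" by (simp add: op_norm_def)
qed

lemma fv_outer: "fv v (outer_self x) = (x \<bullet> v)^2"
  by (simp add: fv_def outer_mult power2_eq_square inner_commute)


lemma push_props:
  fixes \<mu> :: "(real^'n) measure" and F :: "real^'n \<Rightarrow> real"
  assumes p: "prob_space \<mu>" and s: "sets \<mu> = sets borel" and F: "F \<in> borel_measurable borel"
    and b: "AE x in \<mu>. \<bar>F x\<bar> \<le> c"
  shows "prob_space (distr \<mu> borel F)" "sets (distr \<mu> borel F) = sets borel"
    "AE y in distr \<mu> borel F. \<bar>y\<bar> \<le> c"
proof -
  have F': "F \<in> measurable \<mu> borel" using F measurable_cong_sets[OF s refl] by blast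
  show "prob_space (distr \<mu> borel F)" using prob_space.prob_space_distr[OF p F'] .
  show "sets (distr \<mu> borel F) = sets borel" by simp
  have "{y::real \<in> space borel. \<bar>y\<bar> \<le> c} \<in> sets borel" by measurable
  then show "AE y in distr \<mu> borel F. \<bar>y\<bar> \<le> c"
    using b by (subst AE_distr_iff[OF F']) auto
qed

lemma uminus_image: "uminus ` (A::'a::group_add set) = {x. -x \<in> A}"
  by (auto simp: image_iff) (rule_tac x="-x" in bexI, auto)

lemma sym_push:
  fixes \<mu> :: "(real^'n) measure"
  assumes sym: "symmetric_measure \<mu>" and s: "sets \<mu> = sets borel" and B: "B \<in> sets borel"
  shows "emeasure (distr \<mu> borel (\<lambda>x. x \<bullet> v)) (uminus ` B) = emeasure (distr \<mu> borel (\<lambda>x. x \<bullet> v)) B"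
proof -
  have sp: "space \<mu> = UNIV" using sets_eq_imp_space_eq[OF s] by simp
  have g: "(\<lambda>x. x \<bullet> v) \<in> measurable \<mu> borel"
    unfolding measurable_cong_sets[OF s refl] by measurable
  have ub: "uminus ` B = {x::real. -x \<in> B}" by (rule uminus_image)
  have ub': "uminus ` B \<in> sets borel" unfolding ub using B by (rule borel_preimage_uminus)
  have gB: "{x. x \<bullet> v \<in> B} \<in> sets \<mu>" using measurable_sets[OF g B] by (simp add: sp vimage_def)
  have ui: "uminus ` {x::real^'n. x \<bullet> v \<in> B} = {x. x \<bullet> v \<in> uminus ` B}"
    unfolding ub uminus_image by simp
  have "emeasure (distr \<mu> borel (\<lambda>x. x \<bullet> v)) (uminus ` B) = emeasure \<mu> {x. x \<bullet> v \<in> uminus ` B}"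
    using g ub' by (subst emeasure_distr) (auto simp: sp vimage_def)
  also have "\<dots> = emeasure \<mu> (uminus ` {x::real^'n. x \<bullet> v \<in> B})" using ui by simp
  also have "\<dots> = emeasure \<mu> {x. x \<bullet> v \<in> B}"
    using sym gB unfolding symmetric_measure_def by metis
  also have "\<dots> = emeasure (distr \<mu> borel (\<lambda>x. x \<bullet> v)) B"
    using g B by (subst emeasure_distr) (auto simp: sp vimage_def)
  finally show ?thesis .
qed


lemma wass1_eq: "wasserstein 1 M N = enn2real (INF \<gamma>\<in>couplings M N. \<integral>\<^sup>+ z. ennreal (\<bar>fst z - snd z\<bar> powr 1) \<partial>\<gamma>)"
  unfolding wasserstein_def by (simp del: powr_one')

lemma wass2_sq: "(wasserstein 2 M N)^2 = enn2real (INF \<gamma>\<in>couplings M N. \<integral>\<^sup>+ z. ennreal (\<bar>fst z - snd z\<bar> powr 2) \<partial>\<gamma>)"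
  unfolding wasserstein_def by (simp add: powr_half_sqrt del: powr_numeral)

lemma wbound:
  fixes \<mu>1 \<mu>2 :: "(real^'n) measure" and f :: "real^'n^'n \<Rightarrow> real"
  assumes f: "f \<in> dual_unit_ball_op"
    and p1: "prob_space \<mu>1" and s1: "sets \<mu>1 = sets borel"
    and p2: "prob_space \<mu>2" and s2: "sets \<mu>2 = sets borel"
    and b1: "AE x in \<mu>1. norm x \<le> r" and b2: "AE x in \<mu>2. norm x \<le> r"
  shows "(INF \<gamma>\<in>couplings (distr (distr \<mu>1 borel outer_self) borel f) (distr (distr \<mu>2 borel outer_self) borel f).
            \<integral>\<^sup>+ z. ennreal (\<bar>fst z - snd z\<bar> powr 1) \<partial>\<gamma>) \<le> ennreal (2 * r^2)"
proof -
  have lf: "linear f" and fb: "\<And>A. \<bar>f A\<bar> \<le> op_norm A" using f by (auto simp: dual_unit_ball_op_def)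
  have mf: "f \<in> borel_measurable borel" using lf by (rule linear_meas)
  have mF: "(\<lambda>x. f (outer_self x)) \<in> borel_measurable (borel :: (real^'n) measure)"
    using measurable_compose[OF outer_meas mf] by (simp add: comp_def)
  have bnd: "\<bar>f (outer_self x)\<bar> \<le> r^2" if "norm x \<le> r" for x :: "real^'n"
  proof -
    have "\<bar>f (outer_self x)\<bar> \<le> norm x ^ 2" using fb[of "outer_self x"] op_norm_outer[of x] by linarith
    also have "\<dots> \<le> r^2" using that by (intro power_mono) auto
    finally show ?thesis .
  qed
  have d: "distr (distr \<mu> borel outer_self) borel f = distr \<mu> borel (\<lambda>x. f (outer_self x))"
    if "sets \<mu> = sets borel" for \<mu> :: "(real^'n) measure"
  proof -
    have "outer_self \<in> measurable \<mu> borel" using outer_meas measurable_cong_sets[OF that refl] by blast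
    then show ?thesis using mf by (subst distr_distr) (auto simp: comp_def)
  qed
  have a1: "AE x in \<mu>1. \<bar>f (outer_self x)\<bar> \<le> r^2" using b1 by eventually_elim (rule bnd)
  have a2: "AE x in \<mu>2. \<bar>f (outer_self x)\<bar> \<le> r^2" using b2 by eventually_elim (rule bnd)
  show ?thesis unfolding d[OF s1] d[OF s2]
    using prod_bound[OF push_props(1,2)[OF p1 s1 mF a1] push_props(1,2)[OF p2 s2 mF a2]
        push_props(3)[OF p1 s1 mF a1] push_props(3)[OF p2 s2 mF a2]] .
qed

lemma wbound_real:
  fixes \<mu>1 \<mu>2 :: "(real^'n) measure" and f :: "real^'n^'n \<Rightarrow> real"
  assumes f: "f \<in> dual_unit_ball_op"
    and p1: "prob_space \<mu>1" and s1: "sets \<mu>1 = sets borel"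
    and p2: "prob_space \<mu>2" and s2: "sets \<mu>2 = sets borel"
    and b1: "AE x in \<mu>1. norm x \<le> r" and b2: "AE x in \<mu>2. norm x \<le> r"
  shows "wasserstein 1 (distr (distr \<mu>1 borel outer_self) borel f) (distr (distr \<mu>2 borel outer_self) borel f) \<le> 2 * r^2"
proof -
  have "wasserstein 1 (distr (distr \<mu>1 borel outer_self) borel f) (distr (distr \<mu>2 borel outer_self) borel f)
     \<le> enn2real (ennreal (2 * r^2))"
    unfolding wass1_eq by (rule enn2real_mono[OF wbound[OF assms]]) simp
  then show ?thesis by simp
qed


lemma dd:
  fixes \<mu> :: "(real^'n) measure" and v :: "real^'n"
  assumes s: "sets \<mu> = sets borel" and v: "norm v = 1"
  shows "distr (distr \<mu> borel outer_self) borel (fv v) = distr (distr \<mu> borel (\<lambda>x. x \<bullet> v)) borel (\<lambda>x. x^2)"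
proof -
  have lf: "linear (fv v)" using fv_ball[OF v] by (auto simp: dual_unit_ball_op_def)
  have mf: "fv v \<in> borel_measurable borel" using lf by (rule linear_meas)
  have mo: "outer_self \<in> measurable \<mu> borel" using outer_meas measurable_cong_sets[OF s refl] by blast
  have mi: "(\<lambda>x. x \<bullet> v) \<in> measurable \<mu> borel" unfolding measurable_cong_sets[OF s refl] by measurable
  have "distr (distr \<mu> borel outer_self) borel (fv v) = distr \<mu> borel (fv v \<circ> outer_self)"
    by (rule distr_distr[OF mf mo])
  also have "\<dots> = distr \<mu> borel ((\<lambda>x. x^2) \<circ> (\<lambda>x. x \<bullet> v))"
    by (simp add: comp_def fv_outer)
  also have "\<dots> = distr (distr \<mu> borel (\<lambda>x. x \<bullet> v)) borel (\<lambda>x. x^2)"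
    using mi by (intro distr_distr[symmetric]) auto
  finally show ?thesis .
qed

lemma nu_props:
  fixes \<mu> :: "(real^'n) measure" and v :: "real^'n"
  assumes p: "prob_space \<mu>" and s: "sets \<mu> = sets borel"
  shows "prob_space (distr \<mu> borel (\<lambda>x. x \<bullet> v))" "sets (distr \<mu> borel (\<lambda>x. x \<bullet> v)) = sets borel"
proof -
  have mi: "(\<lambda>x. x \<bullet> v) \<in> measurable \<mu> borel" unfolding measurable_cong_sets[OF s refl] by measurable
  show "prob_space (distr \<mu> borel (\<lambda>x. x \<bullet> v))" using prob_space.prob_space_distr[OF p mi] .
  show "sets (distr \<mu> borel (\<lambda>x. x \<bullet> v)) = sets borel" by simp
qed

theorem lemma3p2:
  fixes \<mu>1 \<mu>2 :: "(real^'n) measure" and r :: real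
  assumes "r > 0"
    and "prob_space \<mu>1" and "sets \<mu>1 = sets borel"
    and "prob_space \<mu>2" and "sets \<mu>2 = sets borel"
    and "symmetric_measure \<mu>1" and "symmetric_measure \<mu>2"
    and "AE x in \<mu>1. norm x \<le> r" and "AE x in \<mu>2. norm x \<le> r"
  shows "(W21 \<mu>1 \<mu>2)\<^sup>2 \<le> W11_op (distr \<mu>1 borel outer_self) (distr \<mu>2 borel outer_self)"
proof -
  note p1 = assms(2) and s1 = assms(3) and p2 = assms(4) and s2 = assms(5)
    and y1 = assms(6) and y2 = assms(7) and b1 = assms(8) and b2 = assms(9)
  define T where "T = (\<lambda>f. wasserstein 1 (distr (distr \<mu>1 borel outer_self) borel f) (distr (distr \<mu>2 borel outer_self) borel f))"
  define W where "W = W11_op (distr \<mu>1 borel outer_self) (distr \<mu>2 borel outer_self)"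
  have WT: "W = (SUP f\<in>dual_unit_ball_op. T f)" unfolding W_def T_def W11_op_def ..
  have bdd: "bdd_above (T ` dual_unit_ball_op)"
    unfolding T_def using wbound_real[OF _ p1 s1 p2 s2 b1 b2] by (intro bdd_aboveI2) 
  define w where "w = (\<lambda>v. wasserstein 2 (distr \<mu>1 borel (\<lambda>x. x \<bullet> v)) (distr \<mu>2 borel (\<lambda>x. x \<bullet> v)))"
  have w0: "w v \<ge> 0" for v unfolding w_def wasserstein_def by simp
  have key: "(w v)^2 \<le> W" if v: "norm v = 1" for v :: "real^'n"
  proof -
    let ?n1 = "distr \<mu>1 borel (\<lambda>x. x \<bullet> v)" and ?n2 = "distr \<mu>2 borel (\<lambda>x. x \<bullet> v)"
    let ?I1 = "INF \<gamma>\<in>couplings (distr ?n1 borel (\<lambda>x. x^2)) (distr ?n2 borel (\<lambda>x. x^2)).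
            \<integral>\<^sup>+ z. ennreal (\<bar>fst z - snd z\<bar> powr 1) \<partial>\<gamma>"
    let ?I2 = "INF \<gamma>\<in>couplings ?n1 ?n2. \<integral>\<^sup>+ z. ennreal (\<bar>fst z - snd z\<bar> powr 2) \<partial>\<gamma>"
    have le: "?I2 \<le> ?I1"
      by (rule core_INF[OF nu_props[OF p1 s1] nu_props[OF p2 s2] sym_push[OF y1 s1] sym_push[OF y2 s2]])
    have fin: "?I1 \<le> ennreal (2 * r^2)"
      using wbound[OF fv_ball[OF v] p1 s1 p2 s2 b1 b2] unfolding dd[OF s1 v] dd[OF s2 v] .
    have "(w v)^2 = enn2real ?I2" unfolding w_def by (rule wass2_sq)
    also have "\<dots> \<le> enn2real ?I1"
    proof -
      have "?I1 < top" using fin by (rule le_less_trans) simp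
      then show ?thesis by (rule enn2real_mono[OF le])
    qed
    also have "\<dots> = T (fv v)" unfolding T_def dd[OF s1 v] dd[OF s2 v] by (rule wass1_eq[symmetric])
    also have "\<dots> \<le> W" unfolding WT using bdd fv_ball[OF v] by (rule cSUP_upper2) simp
    finally show ?thesis .
  qed
  obtain i :: 'n where True by blast
  have ax: "norm (axis i (1::real)) = 1" by simp
  have ne: "{v :: real^'n. norm v = 1} \<noteq> {}" using ax by blast
  have W0: "W \<ge> 0" using key[OF ax] by (meson order_trans zero_le_power2)
  have ub: "w v \<le> sqrt W" if "v \<in> {v :: real^'n. norm v = 1}" for v
    using key[of v] that w0[of v] by (simp add: real_le_rsqrt)
  have "W21 \<mu>1 \<mu>2 = (SUP v\<in>{v :: real^'n. norm v = 1}. w v)" unfolding W21_def w_def ..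
  then have le: "W21 \<mu>1 \<mu>2 \<le> sqrt W" and ge: "W21 \<mu>1 \<mu>2 \<ge> 0"
  proof -
    assume eq: "W21 \<mu>1 \<mu>2 = (SUP v\<in>{v :: real^'n. norm v = 1}. w v)"
    show "W21 \<mu>1 \<mu>2 \<le> sqrt W" unfolding eq using ne ub by (rule cSUP_least)
    have "bdd_above (w ` {v :: real^'n. norm v = 1})" using ub by (intro bdd_aboveI2) 
    then show "W21 \<mu>1 \<mu>2 \<ge> 0" unfolding eq
      using w0 ax by (intro cSUP_upper2[where x="axis i 1"]) auto
  qed
  have "(W21 \<mu>1 \<mu>2)^2 \<le> (sqrt W)^2" using le ge by (intro power_mono) auto
  then show ?thesis using W0 by (simp add: W_def)
qed

end
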